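(* Let $d \geq 2$, $j \in [0,d-1]$ and $N \geq 0$. Write $q = \lfloor N/d \rfloor$, $\rho = \overline{(N)}_d$ and $c = \overline{(j - t_d(q))}_d$. Then $$\sum_{k=0}^{N} a_{j,d}(k) = \frac{dN(N+1)}{2} + \frac{q\,d(d-1)}{2} + c(\rho+1) - \frac{\rho(\rho+1)}{2} + d\max\{\rho - c, 0\}.$$
   Context: Let $d \geq 2$ be an integer. For an integer $x$, $\overline{(x)}_d$ denotes the unique integer in $[0,d-1]$ congruent to $x$ modulo $d$. For $n \geq 0$, $s_d(n)$ denotes the sum of the base-$d$ digits of $n$, and $t_d(n) = \overline{(s_d(n))}_d$. For $j \in [0,d-1]$, $(a_{j,d}(n))_{n\geq 0}$ is the strictly increasing enumeration (indexed from $n=0$) of all nonnegative integers $k$ with $s_d(k) \equiv j \pmod d$. *)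

theory Defs
  imports Complex_Main "HOL-Library.Infinite_Set"
begin

fun digit_sum :: "nat \<Rightarrow> nat \<Rightarrow> nat" where
  "digit_sum d n = (if d < 2 \<or> n = 0 then 0 else n mod d + digit_sum d (n div d))"

definition t_d :: "nat \<Rightarrow> nat \<Rightarrow> nat" where
  "t_d d n = digit_sum d n mod d"

definition a_seq :: "nat \<Rightarrow> nat \<Rightarrow> nat \<Rightarrow> nat" where
  "a_seq j d n = enumerate {k. digit_sum d k mod d = j mod d} n"

end

theory Submission
  imports Defs
begin
lemma ds0[simp]: "digit_sum d 0 = 0" by (subst digit_sum.simps) simp
declare digit_sum.simps[simp del]

lemma strict_mono_same_range:
  fixes f g :: "nat \<Rightarrow> nat"
  assumes "strict_mono f" "strict_mono g" "range f = range g"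
  shows "f n = g n"
proof (induction n rule: less_induct)
  case (less n)
  obtain m where m: "g n = f m" using assms(3) by (metis rangeI image_iff)
  obtain m' where m': "f n = g m'" using assms(3) by (metis rangeI image_iff)
  have "n \<le> m"
  proof (rule ccontr)
    assume "\<not> n \<le> m" then have "m < n" by simp
    then have "f m = g m" "g m < g n" using less assms(2) by (auto simp: strict_mono_less)
    then show False using m by simp
  qed
  have "n \<le> m'"
  proof (rule ccontr)
    assume "\<not> n \<le> m'" then have "m' < n" by simp
    have "f m' = g m'" using less \<open>m' < n\<close> by simp
    moreover have "f m' < f n" using assms(1) \<open>m' < n\<close> by (simp add: strict_mono_less)
    ultimately show False using m' by simp
  qed
  have "f n \<le> f m" using \<open>n \<le> m\<close> assms(1) by (simp add: strict_mono_less_eq)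
  moreover have "g n \<le> g m'" using \<open>n \<le> m'\<close> assms(2) by (simp add: strict_mono_less_eq)
  ultimately show ?case using m m' by simp
qed

lemma digit_sum_block:
  assumes "d \<ge> 2" "r < d"
  shows "digit_sum d (d * q + r) = digit_sum d q + r"
proof (cases "d * q + r = 0")
  case True then show ?thesis using assms by simp
next
  case False
  have "(d*q+r) mod d = r" "(d*q+r) div d = q" using assms by auto
  have "digit_sum d (d*q+r) = (d*q+r) mod d + digit_sum d ((d*q+r) div d)"
    using False assms by (subst digit_sum.simps, simp)
  then show ?thesis using \<open>(d*q+r) mod d = r\<close> \<open>(d*q+r) div d = q\<close> by simp
qed

definition cc :: "nat \<Rightarrow> nat \<Rightarrow> nat \<Rightarrow> int" where
  "cc j d k = (int j - int (t_d d k)) mod int d"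

lemma cc_block:
  assumes "d \<ge> 2" "r < d"
  shows "cc j d (d * q + r) = (cc j d q - int r) mod int d"
proof -
  have "int (t_d d (d*q+r)) = (int (t_d d q) + int r) mod int d"
    using assms unfolding t_d_def by (simp add: digit_sum_block zmod_int mod_add_left_eq)
  then have "cc j d (d*q+r) = (int j - (int (t_d d q) + int r) mod int d) mod int d"
    unfolding cc_def by simp
  also have "\<dots> = (int j - (int (t_d d q) + int r)) mod int d" by (rule mod_diff_right_eq)
  also have "int j - (int (t_d d q) + int r) = (int j - int (t_d d q)) - int r" by simp
  also have "((int j - int (t_d d q)) - int r) mod int d = ((int j - int (t_d d q)) mod int d - int r) mod int d"
    by (rule mod_diff_left_eq[symmetric])
  finally show ?thesis unfolding cc_def .
qed

lemma a_seq_eq: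
  assumes "d \<ge> 2" "j < d"
  shows "a_seq j d k = d * k + nat (cc j d k)"
proof -
  let ?S = "{k. digit_sum d k mod d = j mod d}"
  define f where "f k = d * k + nat (cc j d k)" for k
  have ccb: "0 \<le> cc j d k" "cc j d k < int d" for k using assms by (auto simp: cc_def)
  have sm: "strict_mono f"
  unfolding strict_mono_Suc_iff
  proof
    fix n
    have "f n < d * n + d" using ccb[of n] unfolding f_def by linarith
    also have "\<dots> \<le> f (Suc n)" unfolding f_def by simp
    finally show "f n < f (Suc n)" .
  qed
  have rng: "range f = ?S"
  proof (intro equalityI subsetI)
    fix x assume "x \<in> range f"
    then obtain k where x: "x = f k" by auto
    have r: "nat (cc j d k) < d" using ccb[of k] by linarith
    have "int (digit_sum d x mod d) = (int (digit_sum d k) + cc j d k) mod int d"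
      using assms r ccb[of k] unfolding x f_def by (simp add: digit_sum_block zmod_int)
    also have "\<dots> = int j"
    proof -
      define A where "A = int (digit_sum d k)"
      have c: "cc j d k = (int j - A mod int d) mod int d"
        unfolding cc_def t_d_def A_def by (simp add: zmod_int)
      have "(A + cc j d k) mod int d = (A + (int j - A mod int d)) mod int d"
        unfolding c by (simp add: mod_add_right_eq)
      also have "A + (int j - A mod int d) = int j + int d * (A div int d)"
        using mult_div_mod_eq[of "int d" A] by (simp add: algebra_simps)
      also have "(int j + int d * (A div int d)) mod int d = int j"
        using assms by simp
      finally show ?thesis unfolding A_def .
    qed
    finally show "x \<in> ?S" using assms by simp
  next
    fix x assume "x \<in> ?S"
    then have xs: "digit_sum d x mod d = j" using assms by simp
    define q r where "q = x div d" and "r = x mod d"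
    have x: "x = d * q + r" and rd: "r < d" using assms unfolding q_def r_def by auto
    have "int ((digit_sum d q + r) mod d) = int j"
      using xs assms rd unfolding x by (simp add: digit_sum_block)
    then have "(int (digit_sum d q) + int r) mod int d = int j"
      by (simp add: zmod_int)
    then have "(int j - int (digit_sum d q)) mod int d = ((int (digit_sum d q) + int r) mod int d - int (digit_sum d q)) mod int d"
      by simp
    also have "\<dots> = (int (digit_sum d q) + int r - int (digit_sum d q)) mod int d"
      by (rule mod_diff_left_eq)
    also have "\<dots> = int r" using rd by simp
    finally have e: "(int j - int (digit_sum d q)) mod int d = int r" .
    have "cc j d q = (int j - int (digit_sum d q) mod int d) mod int d"
      unfolding cc_def t_d_def by (simp add: zmod_int)
    also have "\<dots> = (int j - int (digit_sum d q)) mod int d" by (rule mod_diff_right_eq)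
    finally have "int r = cc j d q" using e by simp
    then have "x = f q" unfolding f_def x by simp
    then show "x \<in> range f" by simp
  qed
  have inf: "infinite ?S"
    using sm rng by (metis finite_imageD infinite_UNIV_nat strict_mono_imp_inj_on)
  have "enumerate ?S k = f k"
    by (rule strict_mono_same_range[OF strict_mono_enumerate[OF inf] sm])
       (simp add: range_enumerate[OF inf] rng)
  then show ?thesis unfolding a_seq_def f_def .
qed

lemma partial_block:
  assumes "0 \<le> c" "c < int d" "\<rho> < d"
  shows "2 * (\<Sum>r\<le>\<rho>. (c - int r) mod int d) =
         2 * c * (int \<rho> + 1) - int \<rho> * (int \<rho> + 1) + 2 * int d * max (int \<rho> - c) 0"
  using assms(3)
proof (induction \<rho>)
  case 0
  then show ?case using assms by simp
next
  case (Suc p)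
  have IH: "2 * (\<Sum>r\<le>p. (c - int r) mod int d) =
         2 * c * (int p + 1) - int p * (int p + 1) + 2 * int d * max (int p - c) 0"
    using Suc by simp
  have "(c - int (Suc p)) mod int d = (if int (Suc p) \<le> c then c - int (Suc p) else c - int (Suc p) + int d)"
  proof (cases "int (Suc p) \<le> c")
    case True then show ?thesis using assms by simp
  next
    case False
    have "0 \<le> c - int (Suc p) + int d" "c - int (Suc p) + int d < int d" using False Suc.prems assms by auto
    then have "(c - int (Suc p) + int d) mod int d = c - int (Suc p) + int d" by (rule mod_pos_pos_trivial)
    moreover have "(c - int (Suc p) + int d) mod int d = (c - int (Suc p)) mod int d" by (rule mod_add_self2)
    ultimately show ?thesis using False by simp
  qed
  then have T: "(c - int (Suc p)) mod int d = (if int (Suc p) \<le> c then c - int (Suc p) else c - int (Suc p) + int d)" .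
  have sp: "(\<Sum>r\<le>Suc p. (c - int r) mod int d) = (\<Sum>r\<le>p. (c - int r) mod int d) + (c - int (Suc p)) mod int d"
    by simp
  show ?case
  proof (cases "int (Suc p) \<le> c")
    case True
    then have "max (int p - c) 0 = 0" "max (int (Suc p) - c) 0 = 0" by auto
    then show ?thesis unfolding sp using IH T True by (simp add: algebra_simps)
  next
    case False
    then have "max (int p - c) 0 = int p - c" "max (int (Suc p) - c) 0 = int (Suc p) - c" by auto
    then show ?thesis unfolding sp using IH T False by (simp add: algebra_simps)
  qed
qed

lemma sum_lessThan_add_split:
  "(\<Sum>k<(a::nat)+n. f k) = (\<Sum>k<a. f k) + (\<Sum>k<(n::nat). (f (a+k)::int))"
  by (induction n) (simp_all add: add.assoc)

lemma block_sum:
  assumes "d \<ge> 2" "j < d" "\<rho> < d"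
  shows "2 * (\<Sum>k<\<rho>+1. cc j d (d*q + k)) =
         2 * cc j d q * (int \<rho> + 1) - int \<rho> * (int \<rho> + 1) + 2 * int d * max (int \<rho> - cc j d q) 0"
proof -
  have ccb: "0 \<le> cc j d q" "cc j d q < int d" using assms by (auto simp: cc_def)
  have "(\<Sum>k<\<rho>+1. cc j d (d*q + k)) = (\<Sum>r\<le>\<rho>. (cc j d q - int r) mod int d)"
    unfolding Suc_eq_plus1[symmetric] lessThan_Suc_atMost
    by (rule sum.cong) (use assms in \<open>auto simp: cc_block\<close>)
  then show ?thesis using partial_block[OF ccb assms(3)] by simp
qed

lemma full_blocks:
  assumes "d \<ge> 2" "j < d"
  shows "2 * (\<Sum>k<d*m. cc j d k) = int m * int d * (int d - 1)"
proof (induction m)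
  case 0 then show ?case by simp
next
  case (Suc m)
  have ccb: "0 \<le> cc j d m" "cc j d m < int d" using assms by (auto simp: cc_def)
  have e: "d * Suc m = d*m + ((d-1)+1)" using assms by simp
  have "2 * (\<Sum>k<d*Suc m. cc j d k) = 2 * (\<Sum>k<d*m. cc j d k) + 2 * (\<Sum>k<(d-1)+1. cc j d (d*m + k))"
    unfolding e sum_lessThan_add_split by simp
  also have "\<dots> = int m * int d * (int d - 1) + (2 * cc j d m * (int (d-1) + 1) - int (d-1) * (int (d-1) + 1) + 2 * int d * max (int (d-1) - cc j d m) 0)"
    using Suc block_sum[OF assms, of "d-1" m] assms by simp
  also have "\<dots> = int (Suc m) * int d * (int d - 1)"
  proof -
    have "max (int (d-1) - cc j d m) 0 = int d - 1 - cc j d m" using ccb assms by (simp add: of_nat_diff)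
    then show ?thesis using assms by (simp add: of_nat_diff algebra_simps)
  qed
  finally show ?case .
qed

lemma gauss2: "2 * (\<Sum>k<n. int k) = int n * (int n - 1)"
  by (induction n) (simp_all add: algebra_simps)

lemma aux1: "(x::int) = d * a + e \<Longrightarrow> e = b + c \<Longrightarrow> 2 * x = d * (2 * a) + 2 * b + 2 * c"
  by (simp add: algebra_simps)

lemma aux3: "(x::int) = d * (2 * a) + 2 * b + 2 * c \<Longrightarrow> 2 * a = A \<Longrightarrow> 2 * b = B \<Longrightarrow> 2 * c = C
   \<Longrightarrow> x = d * A + B + C"
  by simp

lemma aux2:
  assumes "2 * int S = int d * (int (N+1) * (int (N+1) - 1)) + int q * int d * (int d - 1)
      + (2 * C * (int r + 1) - int r * (int r + 1) + 2 * int d * max (int r - C) 0)"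
    and "int c = C"
  shows "real S = real d * real N * (real N + 1) / 2 + real q * real d * (real d - 1) / 2
           + real c * (real r + 1) - real r * (real r + 1) / 2
           + real d * max (real r - real c) 0"
proof -
  have "2 * int S = int d * (int N * (int N + 1)) + int q * int d * (int d - 1)
      + (2 * int c * (int r + 1) - int r * (int r + 1) + 2 * int d * max (int r - int c) 0)"
    using assms by (simp add: algebra_simps)
  then have "real_of_int (2 * int S) = real_of_int (int d * (int N * (int N + 1)) + int q * int d * (int d - 1)
      + (2 * int c * (int r + 1) - int r * (int r + 1) + 2 * int d * max (int r - int c) 0))"
    by (rule arg_cong)
  then have "2 * real S = real d * (real N * (real N + 1)) + real q * real d * (real d - 1)
      + (2 * real c * (real r + 1) - real r * (real r + 1) + 2 * real d * max (real r - real c) 0)"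
    by (simp add: of_int_max)
  then show ?thesis by (simp add: field_simps)
qed

theorem theorem2:
  fixes d j N :: nat
  assumes "d \<ge> 2" and "j \<le> d - 1"
  defines "q \<equiv> N div d" and "\<rho> \<equiv> N mod d"
      and "c \<equiv> nat ((int j - int (t_d d (N div d))) mod int d)"
  shows "real (\<Sum>k=0..N. a_seq j d k) =
           real d * real N * (real N + 1) / 2 + real q * real d * (real d - 1) / 2
           + real c * (real \<rho> + 1) - real \<rho> * (real \<rho> + 1) / 2
           + real d * max (real \<rho> - real c) 0"
proof -
  have jd: "j < d" using assms(1,2) by simp
  have cq: "int c = cc j d q" unfolding c_def cc_def q_def using assms(1) by simp
  have rd: "\<rho> < d" unfolding \<rho>_def using assms(1) by simp
  have N: "N + 1 = d*q + (\<rho>+1)" unfolding q_def \<rho>_def by simp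
  have "int (\<Sum>k=0..N. a_seq j d k) = (\<Sum>k<N+1. int d * int k + cc j d k)"
    unfolding atLeast0AtMost Suc_eq_plus1[symmetric] lessThan_Suc_atMost[symmetric]
    unfolding of_nat_sum
  proof (rule sum.cong)
    fix k
    have "0 \<le> cc j d k" using assms(1) by (simp add: cc_def)
    then show "int (a_seq j d k) = int d * int k + cc j d k" using a_seq_eq[OF assms(1) jd] by simp
  qed simp
  also have "\<dots> = int d * (\<Sum>k<N+1. int k) + (\<Sum>k<N+1. cc j d k)"
    by (simp only: sum.distrib sum_distrib_left)
  finally have S0: "int (\<Sum>k=0..N. a_seq j d k) = int d * (\<Sum>k<N+1. int k) + (\<Sum>k<N+1. cc j d k)" .
  have sp: "(\<Sum>k<N+1. cc j d k) = (\<Sum>k<d*q. cc j d k) + (\<Sum>k<\<rho>+1. cc j d (d*q + k))"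
    unfolding N by (rule sum_lessThan_add_split)
  have S: "2 * int (\<Sum>k=0..N. a_seq j d k) = int d * (2 * (\<Sum>k<N+1. int k)) + 2 * (\<Sum>k<d*q. cc j d k) + 2 * (\<Sum>k<\<rho>+1. cc j d (d*q + k))"
    using S0 sp by (rule aux1)
  have I: "2 * int (\<Sum>k=0..N. a_seq j d k) = int d * (int (N+1) * (int (N+1) - 1)) + int q * int d * (int d - 1)
      + (2 * cc j d q * (int \<rho> + 1) - int \<rho> * (int \<rho> + 1) + 2 * int d * max (int \<rho> - cc j d q) 0)"
    using S gauss2[of "N+1"] full_blocks[OF assms(1) jd, of q] block_sum[OF assms(1) jd rd, of q] by (rule aux3)
  show ?thesis by (rule aux2[OF I cq])
qed

end
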